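(* Let $\mathcal{G}=(V,E)$ be a $k$-regular connected hypergraph with $n$ vertices, and let $\theta$ be the second largest eigenvalue of $A_{\mathcal{G}}$ in absolute value (i.e. $\theta=\max_{l\ge2}|\lambda_l|$ where $\lambda_1\ge\dots\ge\lambda_n$ are the eigenvalues of $A_{\mathcal{G}}$). Then $$\operatorname{diam}(\mathcal{G})\le\left\lfloor 1+\frac{\log(n-1)}{\log(k/\theta)}\right\rfloor.$$
   Context: A hypergraph $\mathcal{G}=(V,E)$ has a finite vertex set $V$ and a set $E$ of subsets of $V$ (edges), each of cardinality at least $2$. The degree $d_i$ of a vertex $i$ is the number of edges containing $i$; $\mathcal{G}$ is $k$-regular if $d_i=k$ for all $i$. The adjacency matrix $A_{\mathcal{G}}$ has $(A_{\mathcal{G}})_{ij}=\sum_{e\in E,\, i,j\in e}\frac{1}{|e|-1}$ for $i\ne j$ and zero diagonal. A path of length $l$ between $v_0$ and $v_l$ is an alternating sequence $v_0e_1v_1\dots e_lv_l$ of distinct vertices and distinct edges with $v_{i-1},v_i\in e_i$; the distance $d(i,j)$ is the minimum length of an $i$–$j$ path, $\operatorname{diam}(\mathcal{G})=\max_{i,j}d(i,j)$; connected means every two vertices are joined by a path. *)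

theory Defs
  imports "HOL-Analysis.Analysis"
begin

text \<open>Hypergraphs on a finite vertex type 'n (vertex set V = UNIV), edge set E.\<close>

definition hypergraph :: "'n::finite set set \<Rightarrow> bool" where
  "hypergraph E \<longleftrightarrow> (\<forall>e\<in>E. card e \<ge> 2)"

definition hdegree :: "'n::finite set set \<Rightarrow> 'n \<Rightarrow> nat" where
  "hdegree E i = card {e\<in>E. i \<in> e}"

definition hregular :: "'n::finite set set \<Rightarrow> nat \<Rightarrow> bool" where
  "hregular E k \<longleftrightarrow> (\<forall>i. hdegree E i = k)"

definition hadj :: "'n::finite set set \<Rightarrow> real^'n^'n" where
  "hadj E = (\<chi> i j. if i = j then 0
      else (\<Sum>e\<in>{e\<in>E. i \<in> e \<and> j \<in> e}. 1 / (real (card e) - 1)))"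

definition hpath :: "'n::finite set set \<Rightarrow> 'n list \<Rightarrow> 'n set list \<Rightarrow> bool" where
  "hpath E vs es \<longleftrightarrow> length vs = length es + 1 \<and> distinct vs \<and> distinct es \<and>
     set es \<subseteq> E \<and> (\<forall>i < length es. vs ! i \<in> es ! i \<and> vs ! (i+1) \<in> es ! i)"

definition hpath_between :: "'n::finite set set \<Rightarrow> 'n \<Rightarrow> 'n \<Rightarrow> nat \<Rightarrow> bool" where
  "hpath_between E u v l \<longleftrightarrow>
     (\<exists>vs es. hpath E vs es \<and> hd vs = u \<and> last vs = v \<and> length es = l)"

definition hconnected :: "'n::finite set set \<Rightarrow> bool" where
  "hconnected E \<longleftrightarrow> (\<forall>u v. \<exists>l. hpath_between E u v l)"

definition hdist :: "'n::finite set set \<Rightarrow> 'n \<Rightarrow> 'n \<Rightarrow> nat" where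
  "hdist E u v = (LEAST l. hpath_between E u v l)"

definition hdiam :: "'n::finite set set \<Rightarrow> nat" where
  "hdiam E = Max {hdist E u v | u v. True}"

definition eigenvalues_desc :: "real^'n::finite^'n \<Rightarrow> real list \<Rightarrow> bool" where
  "eigenvalues_desc A lam \<longleftrightarrow> length lam = CARD('n) \<and> sorted_wrt (\<ge>) lam \<and>
     (\<forall>x. det (x *\<^sub>R mat 1 - A) = (\<Prod>i<CARD('n). (x - lam ! i)))"

end

theory Submission
  imports Defs
begin


lemma hadj_sym: "hadj E $ i $ j = hadj E $ j $ i"
  unfolding hadj_def by (auto intro!: sum.cong)

lemma hadj_transpose: "transpose (hadj E) = hadj E"
  by (simp add: transpose_def vec_eq_iff hadj_sym)

lemma hadj_nonneg: "hypergraph E \<Longrightarrow> hadj E $ i $ j \<ge> 0"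
proof -
  assume h: "hypergraph E"
  have "\<And>e. e\<in>E \<Longrightarrow> 1 / (real (card e) - 1) \<ge> 0" using h unfolding hypergraph_def by force
  then show ?thesis unfolding hadj_def by (auto intro!: sum_nonneg)
qed

lemma hadj_pos:
  assumes "hypergraph E" "i \<noteq> j" "e \<in> E" "i \<in> e" "j \<in> e"
  shows "hadj E $ i $ j > 0"
proof -
  have fin: "finite {e\<in>E. i \<in> e \<and> j \<in> e}" by simp
  have "\<forall>e\<in>{e\<in>E. i \<in> e \<and> j \<in> e}. 1 / (real (card e) - 1) > 0"
    using assms(1) unfolding hypergraph_def by force
  then have "(\<Sum>e\<in>{e\<in>E. i \<in> e \<and> j \<in> e}. 1 / (real (card e) - 1)) > 0"
    using assms by (intro sum_pos fin) auto
  then show ?thesis using assms unfolding hadj_def by simp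
qed

lemma hadj_posD:
  assumes "hadj E $ i $ j > 0"
  shows "i \<noteq> j \<and> (\<exists>e\<in>E. i \<in> e \<and> j \<in> e)"
proof -
  have ij: "i \<noteq> j" using assms unfolding hadj_def by (cases "i = j") auto
  then have "(\<Sum>e\<in>{e\<in>E. i \<in> e \<and> j \<in> e}. 1 / (real (card e) - 1)) > 0"
    using assms unfolding hadj_def by simp
  then have "{e\<in>E. i \<in> e \<and> j \<in> e} \<noteq> {}" by (metis less_irrefl sum.empty)
  then show ?thesis using ij by blast
qed

lemma hadj_rowsum:
  assumes "hypergraph E" "hregular E k"
  shows "(\<Sum>j\<in>UNIV. hadj E $ i $ j) = real k"
proof -
  let ?c = "\<lambda>e::'a set. 1 / (real (card e) - 1)"
  have "hadj E $ i $ j = (\<Sum>e\<in>E. if i \<in> e \<and> j \<in> e \<and> j \<noteq> i then ?c e else 0)" for j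
  proof (cases "i = j")
    case False
    have "hadj E $ i $ j = (\<Sum>e\<in>{e\<in>E. i \<in> e \<and> j \<in> e}. ?c e)" using False unfolding hadj_def by simp
    also have "\<dots> = (\<Sum>e\<in>E. if i \<in> e \<and> j \<in> e then ?c e else 0)" 
      by (rule sum.inter_filter) simp
    finally show ?thesis using False by simp
  qed (simp add: hadj_def)
  then have "(\<Sum>j\<in>UNIV. hadj E $ i $ j) = (\<Sum>j\<in>UNIV. \<Sum>e\<in>E. if i \<in> e \<and> j \<in> e \<and> j \<noteq> i then ?c e else 0)"
    by simp
  also have "\<dots> = (\<Sum>e\<in>E. \<Sum>j\<in>UNIV. if i \<in> e \<and> j \<in> e \<and> j \<noteq> i then ?c e else 0)"
    by (rule sum.swap)
  also have "\<dots> = (\<Sum>e\<in>E. if i \<in> e then 1 else 0)"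
  proof (rule sum.cong)
    fix e assume e: "e \<in> E"
    have ce: "card e \<ge> 2" using assms(1) e unfolding hypergraph_def by auto
    show "(\<Sum>j\<in>UNIV. if i \<in> e \<and> j \<in> e \<and> j \<noteq> i then ?c e else 0) = (if i \<in> e then 1 else 0)"
    proof (cases "i \<in> e")
      case True
      have "(\<Sum>j\<in>UNIV. if i \<in> e \<and> j \<in> e \<and> j \<noteq> i then ?c e else 0) = (\<Sum>j\<in>UNIV. if j \<in> e - {i} then ?c e else 0)"
        using True by (intro sum.cong) auto
      also have "\<dots> = (\<Sum>j\<in>e - {i}. ?c e)"
        using sum.inter_restrict[of UNIV "\<lambda>_. ?c e" "e-{i}"] by simp
      also have "\<dots> = real (card e - 1) * ?c e"
      proof -
        have "card (e - {i}) = card e - 1" using True by (simp add: card_Diff_singleton)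
        then show ?thesis by (simp only: sum_constant)
      qed
      also have "\<dots> = 1" using ce by (simp add: of_nat_diff)
      finally show ?thesis using True by simp
    qed simp
  qed simp
  also have "\<dots> = real (card {e\<in>E. i \<in> e})"
    by (subst sum.inter_filter[symmetric]) auto
  also have "\<dots> = real k" using assms(2) unfolding hregular_def hdegree_def by simp
  finally show ?thesis .
qed



lemma sym_inner:
  fixes B :: "real^'n^'n"
  assumes "transpose B = B"
  shows "(B *v x) \<bullet> y = x \<bullet> (B *v y)"
  by (metis assms dot_lmul_matrix vector_transpose_matrix)

lemma aux_alg:
  fixes q a :: real
  assumes "q \<ge> 0"
  shows "2 * (- a / (q + 1)) * a + (- a / (q + 1))^2 * q = a^2 * (- q - 2) / (q + 1)^2"
proof -
  have "q + 1 \<noteq> 0" using assms by simp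
  then show ?thesis by (simp add: divide_simps power2_eq_square) algebra
qed

lemma sym_norm_bound:
  fixes B :: "real^'n^'n"
  assumes sym: "transpose B = B" and rho: "\<rho> \<ge> 0"
    and eig: "\<And>s v. v \<noteq> 0 \<Longrightarrow> B *v v = s *\<^sub>R v \<Longrightarrow> \<bar>s\<bar> \<le> \<rho>"
  shows "norm (B *v z) \<le> \<rho> * norm z"
proof -
  let ?f = "\<lambda>x. norm (B *v x)"
  have cont: "continuous_on (sphere 0 1) ?f" by (intro continuous_intros)
  have ne: "sphere (0::real^'n) 1 \<noteq> {}"
    using norm_axis_1[of undefined] by (metis mem_sphere_0 empty_iff)
  obtain x0 where x0s: "x0 \<in> sphere 0 1" and x0m: "\<And>y. y \<in> sphere 0 1 \<Longrightarrow> ?f y \<le> ?f x0"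
    using continuous_attains_sup[OF compact_sphere ne cont] by blast
  have nx0: "norm x0 = 1" using x0s by simp
  define M where "M = (?f x0)^2"
  have M0: "M \<ge> 0" unfolding M_def by simp
  have bnd: "(B *v x) \<bullet> (B *v x) \<le> M * (x \<bullet> x)" for x
  proof (cases "x = 0")
    case False
    then have nx: "norm x > 0" by simp
    have "(inverse (norm x)) *\<^sub>R x \<in> sphere 0 1" using nx by simp
    then have "?f ((inverse (norm x)) *\<^sub>R x) \<le> ?f x0" by (rule x0m)
    then have "norm (B *v x) / norm x \<le> ?f x0" using nx
      by (simp add: matrix_vector_mult_scaleR divide_inverse mult.commute)
    then have "norm (B *v x) \<le> ?f x0 * norm x" using nx by (simp add: divide_le_eq)
    then have "(norm (B *v x))^2 \<le> (?f x0 * norm x)^2" by (simp add: power_mono)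
    then show ?thesis unfolding M_def by (simp add: power_mult_distrib flip: power2_norm_eq_inner)
  qed simp
  define Q where "Q x = M * (x \<bullet> x) - (B *v x) \<bullet> (B *v x)" for x
  have Q0: "Q x \<ge> 0" for x using bnd[of x] unfolding Q_def by simp
  have Qx0: "Q x0 = 0" unfolding Q_def M_def using nx0 by (simp flip: power2_norm_eq_inner)
  define w where "w = M *\<^sub>R x0 - B *v (B *v x0)"
  have exp: "Q (x0 + t *\<^sub>R w) = Q x0 + 2 * t * (w \<bullet> w) + t^2 * Q w" for t
  proof -
    have h0: "(B *v x0) \<bullet> (B *v w) = (B *v (B *v x0)) \<bullet> w" using sym_inner[OF sym] by simp
    have h1: "x0 \<bullet> (B *v (B *v x0)) = (B *v x0) \<bullet> (B *v x0)" using sym_inner[OF sym] by simp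
    have h2: "(B *v x0) \<bullet> (B *v (B *v (B *v x0))) = (B *v (B *v x0)) \<bullet> (B *v (B *v x0))"
      using sym_inner[OF sym] by simp
    from h0 show ?thesis unfolding Q_def w_def
      by (simp add: matrix_vector_right_distrib matrix_vector_mult_scaleR matrix_vector_mult_diff_distrib
          inner_add_left inner_add_right inner_diff_left inner_diff_right power2_eq_square
          inner_commute algebra_simps h1 h2)
  qed
  have "w = 0"
  proof (rule ccontr)
    assume "w \<noteq> 0"
    then have a: "w \<bullet> w > 0" by simp
    define t where "t = - (w \<bullet> w) / (Q w + 1)"
    have q: "Q w \<ge> 0" by (rule Q0)
    have "0 \<le> Q (x0 + t *\<^sub>R w)" by (rule Q0)
    also have "\<dots> = 2 * t * (w \<bullet> w) + t^2 * Q w" using exp Qx0 by simp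
    also have "\<dots> = (w \<bullet> w)^2 * (- Q w - 2) / (Q w + 1)^2"
      unfolding t_def by (rule aux_alg[OF q])
    also have "\<dots> < 0" using a q by (intro divide_neg_pos mult_pos_neg) auto
    finally show False by simp
  qed
  then have BB: "B *v (B *v x0) = M *\<^sub>R x0" unfolding w_def by simp
  define s where "s = sqrt M"
  have ss: "s * s = M" unfolding s_def using M0 by simp
  have s0: "s \<ge> 0" unfolding s_def using M0 by simp
  have x00: "x0 \<noteq> 0" using nx0 by auto
  have sle: "s \<le> \<rho>"
  proof (cases "B *v x0 + s *\<^sub>R x0 = 0")
    case True
    then have "B *v x0 = (-s) *\<^sub>R x0" by (simp add: eq_neg_iff_add_eq_0)
    from eig[OF x00 this] show ?thesis by simp
  next
    case False
    have "B *v (B *v x0 + s *\<^sub>R x0) = s *\<^sub>R (B *v x0 + s *\<^sub>R x0)"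
      using BB ss by (simp add: matrix_vector_right_distrib matrix_vector_mult_scaleR scaleR_add_right)
    from eig[OF False this] s0 show ?thesis by simp
  qed
  have "(norm (B *v z))^2 \<le> (\<rho> * norm z)^2"
  proof -
    have "(norm (B *v z))^2 \<le> M * (norm z)^2" using bnd[of z] by (simp flip: power2_norm_eq_inner)
    also have "\<dots> = (s * norm z)^2" using ss by (simp add: power2_eq_square)
    also have "\<dots> \<le> (\<rho> * norm z)^2" proof -
      have "s * norm z \<le> \<rho> * norm z" using sle by (simp add: mult_right_mono)
      moreover have "0 \<le> s * norm z" using s0 by simp
      ultimately show ?thesis by (rule power_mono)
    qed
    finally show ?thesis .
  qed
  moreover have "0 \<le> \<rho> * norm z" using rho by simp
  ultimately show ?thesis by (rule power2_le_imp_le)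
qed



lemma path_closed:
  assumes "hpath E vs es" "hd vs \<in> S"
    and cl: "\<And>a b e. a \<in> S \<Longrightarrow> e \<in> E \<Longrightarrow> a \<in> e \<Longrightarrow> b \<in> e \<Longrightarrow> a \<noteq> b \<Longrightarrow> b \<in> S"
  shows "\<forall>p < length vs. vs ! p \<in> S"
proof (intro allI impI)
  fix p assume "p < length vs"
  then show "vs ! p \<in> S"
  proof (induction p)
    case 0
    then have "vs \<noteq> []" by auto
    then show ?case using assms(2) by (simp add: hd_conv_nth)
  next
    case (Suc p)
    have P: "length vs = length es + 1" "distinct vs" "set es \<subseteq> E"
      "\<forall>i < length es. vs ! i \<in> es ! i \<and> vs ! (i+1) \<in> es ! i"
      using assms(1) unfolding hpath_def by auto
    have pl: "p < length es" using Suc.prems P(1) by simp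
    have "vs ! p \<in> S" using Suc by simp
    moreover have "es ! p \<in> E" using pl P(3) by auto
    moreover have "vs ! p \<noteq> vs ! (Suc p)" using P(2) Suc.prems by (simp add: nth_eq_iff_index_eq)
    ultimately show ?case using cl P(4) pl by auto
  qed
qed

lemma const_eigvec:
  fixes v :: "real^'n"
  assumes hg: "hypergraph E" and reg: "hregular E k" and con: "hconnected E"
    and ev: "hadj E *v v = real k *\<^sub>R v"
  shows "v $ i = v $ j"
proof -
  let ?A = "hadj E"
  have "Max (range (($) v)) \<in> range (($) v)" by (rule Max_in) auto
  then obtain i0 where i0': "Max (range (($) v)) = v $ i0" by (rule rangeE)
  note i0 = i0'[symmetric]
  have le: "v $ l \<le> v $ i0" for l
  proof -
    have "v $ l \<le> Max (range (($) v))" by (rule Max_ge) auto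
    then show ?thesis using i0 by simp
  qed
  define S where "S = {j. v $ j = v $ i0}"
  have cl: "b \<in> S" if "a \<in> S" "e \<in> E" "a \<in> e" "b \<in> e" "a \<noteq> b" for a b e
  proof -
    have pos: "?A $ a $ b > 0" using hadj_pos[OF hg that(5,2,3,4)] .
    have "(\<Sum>l\<in>UNIV. ?A $ a $ l * v $ l) = real k * v $ a"
    proof -
      have "(hadj E *v v) $ a = (real k *\<^sub>R v) $ a" using ev by simp
      then show ?thesis by (simp add: matrix_vector_mult_def)
    qed
    moreover have "(\<Sum>l\<in>UNIV. ?A $ a $ l * v $ a) = real k * v $ a"
      using hadj_rowsum[OF hg reg, of a] by (simp add: sum_distrib_right[symmetric])
    ultimately have "(\<Sum>l\<in>UNIV. ?A $ a $ l * (v $ a - v $ l)) = 0"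
      by (simp add: right_diff_distrib sum_subtractf)
    moreover have "\<forall>l\<in>UNIV. ?A $ a $ l * (v $ a - v $ l) \<ge> 0"
      using that(1) le hadj_nonneg[OF hg] unfolding S_def by simp
    ultimately have "?A $ a $ b * (v $ a - v $ b) = 0"
    proof -
      note z = \<open>(\<Sum>l\<in>UNIV. ?A $ a $ l * (v $ a - v $ l)) = 0\<close>
      have "\<forall>l\<in>UNIV. ?A $ a $ l * (v $ a - v $ l) = 0"
        using sum_nonneg_eq_0_iff[of UNIV "\<lambda>l. ?A $ a $ l * (v $ a - v $ l)"] z
          \<open>\<forall>l\<in>UNIV. ?A $ a $ l * (v $ a - v $ l) \<ge> 0\<close> by simp
      then show ?thesis by simp
    qed
    then show ?thesis using pos that(1) unfolding S_def by simp
  qed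
  have allS: "u \<in> S" for u
  proof -
    obtain l where "hpath_between E i0 u l" using con unfolding hconnected_def by blast
    then obtain vs es where P: "hpath E vs es" "hd vs = i0" "last vs = u"
      unfolding hpath_between_def by blast
    have "i0 \<in> S" unfolding S_def by simp
    then have all: "\<forall>p < length vs. vs ! p \<in> S"
    proof (intro path_closed[OF P(1)])
      show "hd vs \<in> S" using P(2) \<open>i0 \<in> S\<close> by simp
    qed (rule cl)
    have "vs \<noteq> []" using P(1) unfolding hpath_def by auto
    then have "last vs = vs ! (length vs - 1)" by (simp add: last_conv_nth)
    then show ?thesis using all P(3) \<open>vs \<noteq> []\<close> by auto
  qed
  then show ?thesis unfolding S_def by (metis mem_Collect_eq)
qed

lemma eig_root:
  fixes A :: "real^'n^'n"
  assumes "eigenvalues_desc A lam" "A *v v = s *\<^sub>R v" "v \<noteq> 0"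
  shows "\<exists>l < CARD('n). s = lam ! l"
proof -
  have "(s *\<^sub>R mat 1 - A) *v v = 0"
    using assms(2) by (simp add: matrix_vector_mult_diff_rdistrib flip: scaleR_matrix_vector_assoc)
  then have "\<not> invertible (s *\<^sub>R mat 1 - A)"
    using assms(3) by (metis invertible_def matrix_vector_mul_assoc matrix_vector_mul_lid matrix_vector_mult_0_right)
  then have "det (s *\<^sub>R mat 1 - A) = 0" by (simp add: invertible_det_nz)
  then have "(\<Prod>i<CARD('n). (s - lam ! i)) = 0" using assms(1) unfolding eigenvalues_desc_def by simp
  then show ?thesis by auto
qed



lemma path_extend:
  assumes P: "hpath E vs es" and hd: "hd vs = l" and lst: "last vs = j"
    and e: "e \<in> E" "i \<in> e" "l \<in> e"
  shows "\<exists>vs' es'. hpath E vs' es' \<and> hd vs' = i \<and> last vs' = j \<and> length es' \<le> length es + 1"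
proof -
  have L: "length vs = length es + 1" and D: "distinct vs" and DE: "distinct es"
    and S: "set es \<subseteq> E" and C: "\<forall>r < length es. vs ! r \<in> es ! r \<and> vs ! (r+1) \<in> es ! r"
    using P unfolding hpath_def by auto
  have ne: "vs \<noteq> []" using L by auto
  show ?thesis
  proof (cases "i \<in> set vs")
    case True
    then obtain p where p: "p < length vs" "vs ! p = i" by (auto simp: in_set_conv_nth)
    let ?vs = "drop p vs" and ?es = "drop p es"
    have "hpath E ?vs ?es"
      unfolding hpath_def
    proof (intro conjI allI impI)
      show "length ?vs = length ?es + 1" using L p by simp
      show "distinct ?vs" using D by simp
      show "distinct ?es" using DE by simp
      show "set ?es \<subseteq> E" using S by (meson order_trans set_drop_subset)
      fix r assume r: "r < length ?es"
      then have "p + r < length es" by simp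
      then show "?vs ! r \<in> ?es ! r" "?vs ! (r+1) \<in> ?es ! r" using C p L by (auto simp: add.assoc)
    qed
    moreover have "hd ?vs = i" using p by (simp add: hd_drop_conv_nth)
    moreover have "last ?vs = j" using p lst by simp
    ultimately show ?thesis by (intro exI[of _ ?vs] exI[of _ ?es]) auto
  next
    case iv: False
    show ?thesis
    proof (cases "e \<in> set es")
      case True
      then obtain q where q: "q < length es" "es ! q = e" by (auto simp: in_set_conv_nth)
      let ?vs = "i # drop (Suc q) vs" and ?es = "e # drop (Suc q) es"
      have "hpath E ?vs ?es"
        unfolding hpath_def
      proof (intro conjI allI impI)
        show "length ?vs = length ?es + 1" using L q by simp
        have "i \<notin> set (drop (Suc q) vs)" using iv set_drop_subset by fastforce
        then show "distinct ?vs" using D by simp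
        have "e \<notin> set (drop (Suc q) es)"
        proof
          assume "e \<in> set (drop (Suc q) es)"
          then obtain r where r: "r < length es - Suc q" "drop (Suc q) es ! r = e"
            by (auto simp: in_set_conv_nth)
          then have "es ! (Suc q + r) = es ! q" using q by simp
          moreover have "Suc q + r < length es" using r by simp
          ultimately have "Suc q + r = q" using DE q nth_eq_iff_index_eq by blast
          then show False by simp
        qed
        then show "distinct ?es" using DE by simp
        show "set ?es \<subseteq> E" using S e set_drop_subset[of "Suc q" es] by auto
        fix r assume r: "r < length ?es"
        have H: "?vs ! r \<in> ?es ! r \<and> ?vs ! (r+1) \<in> ?es ! r"
        proof (cases r)
          case 0
          then show ?thesis using e q C L by auto
        next
          case (Suc r')
          then have "Suc q + r' < length es" using r by simp
          then show ?thesis using C L Suc by (auto simp: add.assoc)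
        qed
        then show "?vs ! r \<in> ?es ! r" "?vs ! (r+1) \<in> ?es ! r" by auto
      qed
      moreover have "last ?vs = j" using q L lst by (simp add: last_drop)
      ultimately show ?thesis using q by (intro exI[of _ ?vs] exI[of _ ?es]) auto
    next
      case ne2: False
      let ?vs = "i # vs" and ?es = "e # es"
      have "hpath E ?vs ?es"
        unfolding hpath_def
      proof (intro conjI allI impI)
        show "length ?vs = length ?es + 1" using L by simp
        show "distinct ?vs" using D iv by simp
        show "distinct ?es" using DE ne2 by simp
        show "set ?es \<subseteq> E" using S e by auto
        fix r assume r: "r < length ?es"
        have H: "?vs ! r \<in> ?es ! r \<and> ?vs ! (r+1) \<in> ?es ! r"
        proof (cases r)
          case 0
          then show ?thesis using e hd ne by (simp add: hd_conv_nth)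
        next
          case (Suc r')
          then show ?thesis using C r by auto
        qed
        then show "?vs ! r \<in> ?es ! r" "?vs ! (r+1) \<in> ?es ! r" by auto
      qed
      moreover have "last ?vs = j" using ne lst by simp
      ultimately show ?thesis by (intro exI[of _ ?vs] exI[of _ ?es]) auto
    qed
  qed
qed



lemma funpow_add_lin:
  fixes A :: "real^'n^'n"
  shows "((\<lambda>x. A *v x) ^^ m) (x + y) = ((\<lambda>x. A *v x) ^^ m) x + ((\<lambda>x. A *v x) ^^ m) y"
  by (induction m) (simp_all add: matrix_vector_right_distrib)

lemma walk_path:
  fixes j :: "'n::finite"
  assumes hg: "hypergraph E"
  shows "\<forall>i. (((\<lambda>x. hadj E *v x) ^^ m) (axis j 1)) $ i \<ge> 0 \<and>
    ((((\<lambda>x. hadj E *v x) ^^ m) (axis j 1)) $ i > 0 \<longrightarrow>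
      (\<exists>vs es. hpath E vs es \<and> hd vs = i \<and> last vs = j \<and> length es \<le> m))"
proof (induction m)
  case 0
  have "hpath E [j] []" unfolding hpath_def by simp
  then show ?case by (auto simp: axis_def)
next
  case (Suc m)
  define w where "w = ((\<lambda>x. hadj E *v x) ^^ m) (axis j 1)"
  have w: "((\<lambda>x. hadj E *v x) ^^ Suc m) (axis j 1) = hadj E *v w" unfolding w_def by simp
  have comp: "(hadj E *v w) $ i = (\<Sum>l\<in>UNIV. hadj E $ i $ l * w $ l)" for i
    by (simp add: matrix_vector_mult_def)
  have wnn: "w $ l \<ge> 0" for l using Suc.IH unfolding w_def by blast
  show ?case unfolding w
  proof (intro allI conjI impI)
    fix i
    show "(hadj E *v w) $ i \<ge> 0" unfolding comp
      using wnn hadj_nonneg[OF hg] by (intro sum_nonneg) simp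
    assume pos: "(hadj E *v w) $ i > 0"
    have "\<exists>l. hadj E $ i $ l * w $ l > 0"
    proof (rule ccontr)
      assume "\<not> ?thesis"
      then have "(\<Sum>l\<in>UNIV. hadj E $ i $ l * w $ l) \<le> 0"
        by (intro sum_nonpos) (simp add: not_less)
      then show False using pos comp by simp
    qed
    then obtain l where l: "hadj E $ i $ l * w $ l > 0" by blast
    have al: "hadj E $ i $ l > 0" and wl: "w $ l > 0"
      using l hadj_nonneg[OF hg, of i l] wnn[of l]
      by (auto simp: zero_less_mult_iff)
    obtain vs es where P: "hpath E vs es" "hd vs = l" "last vs = j" "length es \<le> m"
      using Suc.IH wl unfolding w_def by blast
    obtain e where e: "e \<in> E" "i \<in> e" "l \<in> e" using hadj_posD[OF al] by blast
    from path_extend[OF P(1,2,3) e] P(4)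
    show "\<exists>vs es. hpath E vs es \<and> hd vs = i \<and> last vs = j \<and> length es \<le> Suc m"
      by fastforce
  qed
qed



theorem corollary1:
  fixes E :: "'n::finite set set" and k :: nat and lam :: "real list" and \<theta> :: real
  assumes "hypergraph E" and "hregular E k" and "hconnected E"
    and "CARD('n) \<ge> 2"
    and "eigenvalues_desc (hadj E) lam"
    and "\<theta> = Max ((\<lambda>l. \<bar>lam ! l\<bar>) ` {1..<CARD('n)})"
    and "\<theta> < real k"
  shows "int (hdiam E) \<le> \<lfloor>1 + ln (real (CARD('n)) - 1) / ln (real k / \<theta>)\<rfloor>"
proof -
  note hg = assms(1) and reg = assms(2) and con = assms(3) and ed = assms(5)
  define A where "A = hadj E"
  define nr where "nr = real CARD('n)"
  have nr2: "nr \<ge> 2" unfolding nr_def using assms(4) by simp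
  define one where "one = ((\<chi> i. (1::real)) :: real^'n)"
  have th_ge: "\<bar>lam ! l\<bar> \<le> \<theta>" if "1 \<le> l" "l < CARD('n)" for l
    unfolding assms(6) using that by (intro Max_ge) auto
  have th0: "\<theta> \<ge> 0" using th_ge[of 1] assms(4) by force
  have rows: "(\<Sum>j\<in>UNIV. A $ i $ j) = real k" for i unfolding A_def by (rule hadj_rowsum[OF hg reg])
  have cols: "(\<Sum>i\<in>UNIV. A $ i $ j) = real k" for j
    using rows[of j] unfolding A_def by (simp add: hadj_sym)
  have Aone: "A *v one = real k *\<^sub>R one"
    unfolding one_def by (simp add: vec_eq_iff matrix_vector_mult_def rows)
  have sumA: "(\<Sum>i\<in>UNIV. (A *v v) $ i) = real k * (\<Sum>i\<in>UNIV. v $ i)" for v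
  proof -
    have "(\<Sum>i\<in>UNIV. (A *v v) $ i) = (\<Sum>i\<in>UNIV. \<Sum>j\<in>UNIV. A $ i $ j * v $ j)"
      by (simp add: matrix_vector_mult_def)
    also have "\<dots> = (\<Sum>j\<in>UNIV. \<Sum>i\<in>UNIV. A $ i $ j * v $ j)" by (rule sum.swap)
    also have "\<dots> = (\<Sum>j\<in>UNIV. real k * v $ j)"
      by (simp add: sum_distrib_right[symmetric] cols)
    finally show ?thesis by (simp add: sum_distrib_left)
  qed
  have eigA: "\<bar>s\<bar> \<le> \<theta>" if ev: "A *v v = s *\<^sub>R v" and v0: "v \<noteq> 0"
    and sv: "(\<Sum>i\<in>UNIV. v $ i) = 0" for s v
  proof -
    obtain l where l: "l < CARD('n)" "s = lam ! l"
      using eig_root[OF ed _ v0] ev unfolding A_def by blast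
    show ?thesis
    proof (cases "l \<ge> 1")
      case True
      then show ?thesis using th_ge l by simp
    next
      case False
      then have l0: "l = 0" by simp
      have one0: "one \<noteq> 0" unfolding one_def by (simp add: vec_eq_iff)
      obtain q where q: "q < CARD('n)" "real k = lam ! q"
        using eig_root[OF ed _ one0] Aone unfolding A_def by blast
      have "q = 0"
      proof (rule ccontr)
        assume "q \<noteq> 0"
        then have "1 \<le> q" by simp
        from th_ge[OF this q(1)] show False using q(2) assms(7) by simp
      qed
      then have sk: "s = real k" using l l0 q by simp
      have const: "v $ i = v $ j" for i j
        using const_eigvec[OF hg reg con] ev sk unfolding A_def by blast
      have "(\<Sum>i\<in>UNIV. v $ i) = nr * v $ i" for i
      proof -
        have "(\<Sum>i'\<in>(UNIV::'n set). v $ i') = (\<Sum>i'\<in>(UNIV::'n set). v $ i)"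
          by (rule sum.cong) (auto intro: const)
        then show ?thesis unfolding nr_def by simp
      qed
      then have "v $ i = 0" for i using sv nr2 by simp
      then have "v = 0" by (simp add: vec_eq_iff)
      then show ?thesis using v0 by simp
    qed
  qed
  define B where "B = ((\<chi> i j. A $ i $ j - real k / nr) :: real^'n^'n)"
  have Bv: "(B *v v) $ i = (A *v v) $ i - real k / nr * (\<Sum>j\<in>UNIV. v $ j)" for v i
    unfolding B_def by (simp add: matrix_vector_mult_def left_diff_distrib sum_subtractf sum_distrib_left)
  have symB: "transpose B = B"
    unfolding B_def A_def by (simp add: transpose_def vec_eq_iff hadj_sym)
  have nr0: "nr \<noteq> 0" using nr2 by simp
  have cardU: "real (card (UNIV :: 'n set)) = nr" unfolding nr_def by simp
  have eigB: "\<bar>s\<bar> \<le> \<theta>" if ev: "B *v v = s *\<^sub>R v" and v0: "v \<noteq> 0" for s v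
  proof -
    have "(\<Sum>i\<in>UNIV. (B *v v) $ i) = 0"
      using sumA[of v] nr0 by (simp add: Bv sum_subtractf cardU)
    then have "s * (\<Sum>i\<in>UNIV. v $ i) = 0" using ev by (simp add: sum_distrib_left)
    then consider "s = 0" | "(\<Sum>i\<in>UNIV. v $ i) = 0" by auto
    then show ?thesis
    proof cases
      case 1 then show ?thesis using th0 by simp
    next
      case 2
      have "A *v v = B *v v" using 2 by (simp add: vec_eq_iff Bv)
      then show ?thesis using eigA[OF _ v0 2] ev by simp
    qed
  qed
  have normB: "norm (B *v z) \<le> \<theta> * norm z" for z
    by (rule sym_norm_bound[OF symB th0 eigB])
  define f where "f = (\<lambda>x. A *v x)"
  have iter: "(\<Sum>i\<in>UNIV. ((f ^^ m) p) $ i) = 0 \<and> norm ((f ^^ m) p) \<le> \<theta> ^ m * norm p"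
    if sp: "(\<Sum>i\<in>UNIV. p $ i) = 0" for p m
  proof (induction m)
    case 0 then show ?case using sp by simp
  next
    case (Suc m)
    let ?q = "(f ^^ m) p"
    have sq: "(\<Sum>i\<in>UNIV. ?q $ i) = 0" using Suc by simp
    have AB: "A *v ?q = B *v ?q" using sq by (simp add: vec_eq_iff Bv)
    have "(\<Sum>i\<in>UNIV. (A *v ?q) $ i) = 0" using sumA[of ?q] sq by simp
    moreover have "norm (A *v ?q) \<le> \<theta> ^ Suc m * norm p"
    proof -
      have "norm (A *v ?q) \<le> \<theta> * norm ?q" using normB AB by simp
      also have "\<dots> \<le> \<theta> * (\<theta> ^ m * norm p)" using Suc th0 by (simp add: mult_left_mono)
      finally show ?thesis by simp
    qed
    ultimately show ?case unfolding f_def by simp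
  qed
  have iter_one: "(f ^^ m) (c *\<^sub>R one) = (c * real k ^ m) *\<^sub>R one" for c m
    by (induction m) (simp_all add: f_def matrix_vector_mult_scaleR Aone)
  define m where "m = nat \<lfloor>1 + ln (nr - 1) / ln (real k / \<theta>)\<rfloor>"
  have key: "real k ^ m > \<theta> ^ m * (nr - 1) \<and> m \<ge> 1"
  proof (cases "\<theta> = 0")
    case True
    then have "m = 1" unfolding m_def by simp
    then show ?thesis using True assms(7) by simp
  next
    case False
    then have thp: "\<theta> > 0" using th0 by simp
    define L where "L = ln (real k / \<theta>)"
    have kp: "real k > 0" using thp assms(7) by simp
    have L0: "L > 0" unfolding L_def using thp assms(7) by simp
    define x where "x = ln (nr - 1) / L"
    have x0: "x \<ge> 0" unfolding x_def using L0 nr2 by simp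
    have mx: "real m > x"
    proof -
      have "real_of_int \<lfloor>1 + x\<rfloor> > x" by linarith
      moreover have "\<lfloor>1 + x\<rfloor> \<ge> 0" using x0 by simp
      ultimately show ?thesis unfolding m_def x_def L_def by simp
    qed
    then have "real m * L > ln (nr - 1)" unfolding x_def using L0 by (simp add: divide_less_eq)
    then have "exp (ln (nr - 1)) < exp (real m * L)" by simp
    also have "exp (real m * L) = (real k / \<theta>) ^ m"
      unfolding L_def using thp kp by (simp add: exp_of_nat_mult)
    finally have "nr - 1 < (real k / \<theta>) ^ m" using nr2 by simp
    then have "nr - 1 < real k ^ m / \<theta> ^ m" by (simp add: power_divide)
    then have "\<theta> ^ m * (nr - 1) < real k ^ m" using thp by (simp add: field_simps)
    moreover have "m \<ge> 1" using mx x0 by simp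
    ultimately show ?thesis by simp
  qed
  define c where "c = 1 / nr"
  define P where "P i = axis i 1 - c *\<^sub>R one" for i
  have sumP: "(\<Sum>l\<in>UNIV. P i $ l) = 0" for i
    unfolding P_def c_def one_def using nr0 by (simp add: sum_subtractf axis_def cardU)
  have normP: "norm (P i) * norm (P i') = 1 - 1 / nr" for i i'
  proof -
    have "P i \<bullet> P i = 1 - 1 / nr" for i
    proof -
      have "axis i 1 \<bullet> one = 1" unfolding one_def by (simp add: inner_axis')
      moreover have "one \<bullet> one = nr" unfolding one_def by (simp add: inner_vec_def cardU)
      ultimately show ?thesis unfolding P_def c_def using nr0
        by (simp add: inner_diff_left inner_diff_right inner_axis_axis inner_commute
            power2_eq_square field_simps)
    qed
    then have "norm (P i) = sqrt (1 - 1/nr)" "norm (P i') = sqrt (1 - 1/nr)"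
      by (simp_all add: norm_eq_sqrt_inner)
    moreover have "1 - 1/nr \<ge> 0" using nr2 by simp
    ultimately show ?thesis by simp
  qed
  have entry_pos: "((f ^^ m) (axis j 1)) $ i > 0" for i j
  proof -
    have dec: "axis j 1 = c *\<^sub>R one + P j" unfolding P_def by simp
    define q where "q = (f ^^ m) (P j)"
    have it: "(\<Sum>l\<in>UNIV. q $ l) = 0" "norm q \<le> \<theta> ^ m * norm (P j)"
      using iter[OF sumP[of j], of m] unfolding q_def by auto
    have fm: "(f ^^ m) (axis j 1) = (c * real k ^ m) *\<^sub>R one + q"
      unfolding dec q_def iter_one[symmetric] f_def by (rule funpow_add_lin)
    have qi: "q $ i = P i \<bullet> q"
    proof -
      have "one \<bullet> q = 0" using it(1) unfolding one_def by (simp add: inner_vec_def)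
      then show ?thesis unfolding P_def by (simp add: inner_diff_left inner_axis')
    qed
    have "\<bar>q $ i\<bar> \<le> norm (P i) * norm q" unfolding qi by (rule Cauchy_Schwarz_ineq2)
    also have "\<dots> \<le> norm (P i) * (\<theta> ^ m * norm (P j))" using it(2) by (simp add: mult_left_mono)
    also have "\<dots> = \<theta> ^ m * (norm (P i) * norm (P j))" by (simp add: mult_ac)
    also have "\<dots> = \<theta> ^ m * (1 - 1 / nr)" by (simp only: normP)
    finally have qb: "\<bar>q $ i\<bar> \<le> \<theta> ^ m * (1 - 1 / nr)" .
    have "\<theta> ^ m * (1 - 1 / nr) = \<theta> ^ m * (nr - 1) / nr" using nr0 by (simp add: field_simps)
    also have "\<dots> < real k ^ m / nr" using key nr2 by (simp add: divide_strict_right_mono)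
    finally have "\<bar>q $ i\<bar> < c * real k ^ m" using qb unfolding c_def by simp
    then show ?thesis unfolding fm one_def by simp
  qed
  have dist: "hdist E i j \<le> m" for i j
  proof -
    obtain vs es where P: "hpath E vs es" "hd vs = i" "last vs = j" "length es \<le> m"
      using walk_path[OF hg, of m j] entry_pos[of j i] unfolding f_def A_def by blast
    then have "hpath_between E i j (length es)" unfolding hpath_between_def by blast
    then have "hdist E i j \<le> length es" unfolding hdist_def by (rule Least_le)
    then show ?thesis using P(4) by simp
  qed
  have "hdiam E \<le> m"
    unfolding hdiam_def
  proof (rule Max.boundedI)
    have "{hdist E u v |u v. True} = (\<lambda>(u, v). hdist E u v) ` UNIV" by auto
    then show "finite {hdist E u v |u v. True}" by simp
    show "{hdist E u v |u v. True} \<noteq> {}" by auto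
  qed (use dist in auto)
  moreover have "int m = \<lfloor>1 + ln (real (CARD('n)) - 1) / ln (real k / \<theta>)\<rfloor>"
  proof -
    have "\<lfloor>1 + ln (nr - 1) / ln (real k / \<theta>)\<rfloor> \<ge> 1" using key unfolding m_def by linarith
    then show ?thesis unfolding m_def nr_def by simp
  qed
  ultimately show ?thesis by linarith
qed


end
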